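(* For $n\geq 2$ let $t_n$ be the number of ordered pairs of words $(w,z)$ over the alphabet $\{A,B,C,D\}$ satisfying: (i) both $w$ and $z$ start with the letter $A$, and $|w|+|z|=n$; (ii) $w$ and $z$ contain the same number of letters $A$; (iii) neither $w$ nor $z$ contains a $CB$-factor (a letter $C$ immediately followed by a letter $B$); (vi) for all $i\geq 1$ and all $k\geq 1$, if the $i$th letter $A$ from the right in $w$ is immediately preceded by a letter $C$ and immediately followed by $k$ consecutive letters $B$, then the $i$th segment of $z$ from the left contains at least $k$ letters $B$. Let $T(x)=\sum_{n\geq 2}t_nx^n$. Then \[T(x)=\frac{x^2(1-2x-x^2+x^3)}{1-8x+21x^2-19x^3-2x^4+11x^5-6x^6+x^7}.\]
   Context: A segment of a word $v$ over $\{A,B,C,D\}$ is a factor (consecutive letters) that starts with a letter $A$ and ends immediately before the next letter $A$, or at the end of $v$. The $i$th segment from the left is the one starting at the $i$th letter $A$ from the left. The words $w$ and $z$ need not have the same length. *)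

theory Defs
  imports "HOL-Computational_Algebra.Formal_Power_Series"
begin

datatype letter = A | B | C | D

type_synonym word = "letter list"

definition apos :: "word \<Rightarrow> nat list" where
  "apos w = filter (\<lambda>p. w ! p = A) [0..<length w]"

definition countA :: "word \<Rightarrow> nat" where
  "countA w = length (filter (\<lambda>c. c = A) w)"

definition has_CB :: "word \<Rightarrow> bool" where
  "has_CB w \<longleftrightarrow> (\<exists>p. Suc p < length w \<and> w ! p = C \<and> w ! Suc p = B)"

text \<open>The i-th segment (i \<ge> 1) of z from the left: starts at the i-th letter A from the left
  and ends just before the next A (or at the end of z).\<close>
definition segment :: "word \<Rightarrow> nat \<Rightarrow> word" where
  "segment z i = (let q = apos z ! (i - 1) in A # takeWhile (\<lambda>c. c \<noteq> A) (drop (Suc q) z))"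

definition countB :: "word \<Rightarrow> nat" where
  "countB w = length (filter (\<lambda>c. c = B) w)"

definition cond_iv :: "word \<Rightarrow> word \<Rightarrow> bool" where
  "cond_iv w z \<longleftrightarrow>
     (\<forall>i k. 1 \<le> i \<longrightarrow> 1 \<le> k \<longrightarrow> i \<le> length (apos w) \<longrightarrow>
        (let p = rev (apos w) ! (i - 1) in
          0 < p \<and> w ! (p - 1) = C \<and> p + k < length w \<and> (\<forall>j\<in>{1..k}. w ! (p + j) = B))
        \<longrightarrow> i \<le> length (apos z) \<and> k \<le> countB (segment z i))"

definition good_pair :: "word \<Rightarrow> word \<Rightarrow> bool" where
  "good_pair w z \<longleftrightarrow>
     w \<noteq> [] \<and> hd w = A \<and> z \<noteq> [] \<and> hd z = A \<and>
     countA w = countA z \<and>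
     \<not> has_CB w \<and> \<not> has_CB z \<and>
     cond_iv w z"

definition t_count :: "nat \<Rightarrow> nat" where
  "t_count n = card {(w, z). length w + length z = n \<and> good_pair w z}"

end

theory Submission imports Defs begin


definition gf :: "('a \<Rightarrow> nat) \<Rightarrow> 'a set \<Rightarrow> real fps" where
  "gf sz S = Abs_fps (\<lambda>n. real (card {x\<in>S. sz x = n}))"

definition finl :: "('a \<Rightarrow> nat) \<Rightarrow> 'a set \<Rightarrow> bool" where
  "finl sz S \<longleftrightarrow> (\<forall>n. finite {x\<in>S. sz x = n})"

lemma gf_nth: "fps_nth (gf sz S) n = real (card {x\<in>S. sz x = n})"
  by (simp add: gf_def)

lemma finl_subset: "finl sz T \<Longrightarrow> S \<subseteq> T \<Longrightarrow> finl sz S"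
  unfolding finl_def
proof
  fix n assume h: "\<forall>n. finite {x\<in>T. sz x = n}" "S \<subseteq> T"
  have "{x\<in>S. sz x = n} \<subseteq> {x\<in>T. sz x = n}" using h(2) by blast
  then show "finite {x\<in>S. sz x = n}" using h(1) finite_subset by blast
qed

lemma finite_letter: "finite (UNIV :: letter set)"
proof -
  have "(UNIV :: letter set) = {A,B,C,D}" by (auto intro: letter.exhaust)
  then show ?thesis by (metis finite.emptyI finite.insertI)
qed

lemma finl_words: "finl length (S :: word set)"
  unfolding finl_def
proof
  fix n
  have "finite {xs :: word. set xs \<subseteq> UNIV \<and> length xs = n}"
    by (rule finite_lists_length_eq[OF finite_letter])
  then show "finite {x\<in>S. length x = n}" by (rule finite_subset[rotated]) auto
qed

lemma finl_prod:
  assumes "finl s1 S1" "finl s2 S2"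
  shows "finl (\<lambda>(a,b). s1 a + s2 b) (S1 \<times> S2)"
  unfolding finl_def
proof
  fix n
  have "{x\<in>S1 \<times> S2. (\<lambda>(a,b). s1 a + s2 b) x = n} \<subseteq>
        (\<Union>i\<in>{0..n}. {a\<in>S1. s1 a = i} \<times> {b\<in>S2. s2 b = n - i})" by auto
  moreover have "finite (\<Union>i\<in>{0..n}. {a\<in>S1. s1 a = i} \<times> {b\<in>S2. s2 b = n - i})"
    using assms unfolding finl_def by auto
  ultimately show "finite {x\<in>S1 \<times> S2. (\<lambda>(a,b). s1 a + s2 b) x = n}" by (rule finite_subset)
qed

lemma gf_prod:
  assumes "finl s1 S1" "finl s2 S2"
  shows "gf (\<lambda>(a,b). s1 a + s2 b) (S1 \<times> S2) = gf s1 S1 * gf s2 S2"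
proof (rule fps_ext)
  fix n
  have eq: "{x\<in>S1 \<times> S2. (\<lambda>(a,b). s1 a + s2 b) x = n} =
        (\<Union>i\<in>{0..n}. {a\<in>S1. s1 a = i} \<times> {b\<in>S2. s2 b = n - i})" by auto
  have "card (\<Union>i\<in>{0..n}. {a\<in>S1. s1 a = i} \<times> {b\<in>S2. s2 b = n - i})
      = (\<Sum>i=0..n. card ({a\<in>S1. s1 a = i} \<times> {b\<in>S2. s2 b = n - i}))"
    by (rule card_UN_disjoint) (use assms in \<open>auto simp: finl_def\<close>)
  also have "\<dots> = (\<Sum>i=0..n. card {a\<in>S1. s1 a = i} * card {b\<in>S2. s2 b = n - i})"
    by (simp add: card_cartesian_product)
  finally show "fps_nth (gf (\<lambda>(a,b). s1 a + s2 b) (S1 \<times> S2)) n = fps_nth (gf s1 S1 * gf s2 S2) n"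
    by (simp add: gf_nth fps_mult_nth eq)
qed

lemma gf_image:
  assumes "inj_on f S" "\<And>x. x \<in> S \<Longrightarrow> sz' (f x) = sz x + c"
  shows "gf sz' (f ` S) = fps_X ^ c * gf sz S"
proof (rule fps_ext)
  fix n
  have e: "{y\<in>f ` S. sz' y = n} = f ` {x\<in>S. sz x + c = n}" using assms(2) by auto
  have "card {y\<in>f ` S. sz' y = n} = card {x\<in>S. sz x + c = n}"
    unfolding e by (rule card_image) (rule inj_on_subset[OF assms(1)], auto)
  moreover have "card {x\<in>S. sz x + c = n} = (if n < c then 0 else card {x\<in>S. sz x = n - c})"
  proof (cases "n < c")
    case True then have "{x\<in>S. sz x + c = n} = {}" by auto
    then show ?thesis using True by simp
  next
    case False then have "{x\<in>S. sz x + c = n} = {x\<in>S. sz x = n - c}" by auto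
    then show ?thesis using False by simp
  qed
  ultimately show "fps_nth (gf sz' (f ` S)) n = fps_nth (fps_X ^ c * gf sz S) n"
    by (simp add: gf_nth fps_X_power_mult_nth)
qed

lemma gf_union:
  assumes "finl sz S" "finl sz T" "S \<inter> T = {}"
  shows "gf sz (S \<union> T) = gf sz S + gf sz T"
proof (rule fps_ext)
  fix n
  have e: "{x\<in>S \<union> T. sz x = n} = {x\<in>S. sz x = n} \<union> {x\<in>T. sz x = n}" by auto
  have "card {x\<in>S \<union> T. sz x = n} = card {x\<in>S. sz x = n} + card {x\<in>T. sz x = n}"
    unfolding e by (rule card_Un_disjoint) (use assms in \<open>auto simp: finl_def\<close>)
  then show "fps_nth (gf sz (S \<union> T)) n = fps_nth (gf sz S + gf sz T) n" by (simp add: gf_nth)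
qed

lemma gf_diff:
  assumes "finl sz S" "T \<subseteq> S"
  shows "gf sz (S - T) = gf sz S - gf sz T"
proof (rule fps_ext)
  fix n
  have e: "{x\<in>S - T. sz x = n} = {x\<in>S. sz x = n} - {x\<in>T. sz x = n}" by auto
  have "card {x\<in>S - T. sz x = n} = card {x\<in>S. sz x = n} - card {x\<in>T. sz x = n}"
  proof -
    have fS: "finite {x\<in>S. sz x = n}" using assms(1) by (simp add: finl_def)
    have sub: "{x\<in>T. sz x = n} \<subseteq> {x\<in>S. sz x = n}" using assms(2) by blast
    show ?thesis unfolding e by (rule card_Diff_subset[OF finite_subset[OF sub fS] sub])
  qed
  moreover have "card {x\<in>T. sz x = n} \<le> card {x\<in>S. sz x = n}"
  proof -
    have fS: "finite {x\<in>S. sz x = n}" using assms(1) by (simp add: finl_def)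
    have sub: "{x\<in>T. sz x = n} \<subseteq> {x\<in>S. sz x = n}" using assms(2) by blast
    show ?thesis by (rule card_mono[OF fS sub])
  qed
  ultimately show "fps_nth (gf sz (S - T)) n = fps_nth (gf sz S - gf sz T) n" by (simp add: gf_nth)
qed

lemma gf_single: assumes "sz x = 0" shows "gf sz {x} = 1"
proof (rule fps_ext)
  fix n
  have "{y\<in>{x}. sz y = n} = (if n = 0 then {x} else {})" using assms by auto
  then show "fps_nth (gf sz {x}) n = fps_nth 1 n" by (simp add: gf_nth)
qed


definition endC :: "word \<Rightarrow> bool" where "endC x \<longleftrightarrow> x \<noteq> [] \<and> last x = C"
definition leadB :: "word \<Rightarrow> nat" where "leadB x = length (takeWhile (\<lambda>c. c = B) x)"
definition Lw :: "word set" where "Lw = {x. A \<notin> set x \<and> \<not> has_CB x}"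
definition Mw :: "word set" where "Mw = {x \<in> Lw. x = [] \<or> hd x \<noteq> B}"
definition Yw :: "word set" where "Yw = {x. set x \<subseteq> {C, D}}"
definition Y1w :: "word set" where "Y1w = {[]} \<union> (\<lambda>y. y @ [D]) ` Yw"
definition Rw :: "(word \<times> word) set" where
  "Rw = {(x, y). x \<in> Lw \<and> y \<in> Lw \<and> leadB x \<le> countB y}"

abbreviation szp :: "word \<times> word \<Rightarrow> nat" where "szp \<equiv> (\<lambda>(a,b). length a + length b)"

lemma ex_nat_split: "(\<exists>p::nat. P p) \<longleftrightarrow> P 0 \<or> (\<exists>p. P (Suc p))"
  by (metis not0_implies_Suc)

lemma has_CB_Nil[simp]: "\<not> has_CB []" by (simp add: has_CB_def)

lemma has_CB_Cons: "has_CB (a # x) \<longleftrightarrow> (a = C \<and> x \<noteq> [] \<and> hd x = B) \<or> has_CB x"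
proof -
  have "has_CB (a # x) \<longleftrightarrow> (\<exists>p. Suc p < length (a # x) \<and> (a # x) ! p = C \<and> (a # x) ! Suc p = B)"
    by (simp add: has_CB_def)
  also have "\<dots> \<longleftrightarrow> (a = C \<and> x \<noteq> [] \<and> hd x = B) \<or> has_CB x"
    by (subst ex_nat_split) (auto simp: has_CB_def hd_conv_nth)
  finally show ?thesis .
qed

lemma has_CB_append:
  "has_CB (xs @ ys) \<longleftrightarrow> has_CB xs \<or> has_CB ys \<or> (xs \<noteq> [] \<and> ys \<noteq> [] \<and> last xs = C \<and> hd ys = B)"
  by (induction xs) (auto simp: has_CB_Cons)

lemma letter_cases: "(x::letter) = A \<or> x = B \<or> x = C \<or> x = D"
  by (cases x) auto

lemma Lw_Cons: "a # x \<in> Lw \<longleftrightarrow> a \<noteq> A \<and> x \<in> Lw \<and> \<not> (a = C \<and> x \<noteq> [] \<and> hd x = B)"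
  by (auto simp: Lw_def has_CB_Cons)

lemma Lw_decomp: "Lw = {[]} \<union> (Cons B) ` Lw \<union> (Cons D) ` Lw \<union> (Cons C) ` Mw"
proof (intro equalityI subsetI)
  fix x assume x: "x \<in> Lw"
  show "x \<in> {[]} \<union> (Cons B) ` Lw \<union> (Cons D) ` Lw \<union> (Cons C) ` Mw"
  proof (cases x)
    case Nil then show ?thesis by simp
  next
    case (Cons a x')
    then have h: "a \<noteq> A" "x' \<in> Lw" "\<not> (a = C \<and> x' \<noteq> [] \<and> hd x' = B)" using x Lw_Cons by auto
    then show ?thesis using letter_cases[of a] Cons by (auto simp: Mw_def)
  qed
next
  fix x assume "x \<in> {[]} \<union> (Cons B) ` Lw \<union> (Cons D) ` Lw \<union> (Cons C) ` Mw"
  then show "x \<in> Lw" by (auto simp: Lw_Cons Mw_def) (auto simp: Lw_def)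
qed

lemma Mw_eq: "Mw = Lw - (Cons B) ` Lw"
  by (auto simp: Mw_def Lw_Cons neq_Nil_conv)

lemma gf_Cons: "gf length (Cons a ` S) = fps_X * gf length S"
  using gf_image[of "Cons a" S length length 1] by simp

lemma gf_L: "gf length Lw = 1 + 2 * fps_X * gf length Lw + fps_X * (gf length Lw - fps_X * gf length Lw)"
proof -
  have d1: "{[]} \<inter> (Cons B) ` Lw = {}" by auto
  have d2: "({[]} \<union> (Cons B) ` Lw) \<inter> (Cons D) ` Lw = {}" by auto
  have d3: "({[]} \<union> (Cons B) ` Lw \<union> (Cons D) ` Lw) \<inter> (Cons C) ` Mw = {}" by auto
  have sub: "(Cons B) ` Lw \<subseteq> Lw" by (auto simp: Lw_Cons)
  have "gf length Lw = gf length ({[]} \<union> (Cons B) ` Lw \<union> (Cons D) ` Lw \<union> (Cons C) ` Mw)"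
    by (rule arg_cong[OF Lw_decomp])
  also have "\<dots> = gf length {[]::word} + gf length ((Cons B) ` Lw) + gf length ((Cons D) ` Lw) + gf length ((Cons C) ` Mw)"
    by (simp only: gf_union[OF finl_words finl_words d3] gf_union[OF finl_words finl_words d2] gf_union[OF finl_words finl_words d1])
  also have "\<dots> = 1 + fps_X * gf length Lw + fps_X * gf length Lw + fps_X * (gf length Lw - fps_X * gf length Lw)"
    by (simp add: gf_single gf_Cons Mw_eq gf_diff[OF finl_words sub])
  finally show ?thesis by (simp add: algebra_simps)
qed

lemma gf_M: "gf length Mw = gf length Lw - fps_X * gf length Lw"
proof -
  have sub: "(Cons B) ` Lw \<subseteq> Lw" by (auto simp: Lw_Cons)
  show ?thesis by (simp add: gf_Cons Mw_eq gf_diff[OF finl_words sub])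
qed

lemma Yw_decomp: "Yw = {[]} \<union> (Cons C) ` Yw \<union> (Cons D) ` Yw"
proof (intro equalityI subsetI)
  fix x assume x: "x \<in> Yw"
  show "x \<in> {[]} \<union> (Cons C) ` Yw \<union> (Cons D) ` Yw"
    using x by (cases x) (auto simp: Yw_def)
qed (auto simp: Yw_def)

lemma gf_Y: "gf length Yw = 1 + 2 * fps_X * gf length Yw"
proof -
  have d1: "{[]} \<inter> (Cons C) ` Yw = {}" by auto
  have d2: "({[]} \<union> (Cons C) ` Yw) \<inter> (Cons D) ` Yw = {}" by auto
  have "gf length Yw = gf length ({[]} \<union> (Cons C) ` Yw \<union> (Cons D) ` Yw)"
    by (rule arg_cong[OF Yw_decomp])
  also have "\<dots> = gf length {[]::word} + gf length ((Cons C) ` Yw) + gf length ((Cons D) ` Yw)"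
    by (simp only: gf_union[OF finl_words finl_words d2] gf_union[OF finl_words finl_words d1])
  finally have "gf length Yw = gf length {[]::word} + gf length ((Cons C) ` Yw) + gf length ((Cons D) ` Yw)" .
  then show ?thesis by (simp add: gf_single gf_Cons algebra_simps)
qed

lemma gf_snoc: "gf length ((\<lambda>y. y @ [a]) ` S) = fps_X * gf length S"
  using gf_image[of "\<lambda>y. y @ [a]" S length length 1] by (simp add: inj_on_def)

lemma gf_Y1: "gf length Y1w = 1 + fps_X * gf length Yw"
proof -
  have d: "{[]} \<inter> (\<lambda>y. y @ [D]) ` Yw = {}" by auto
  show ?thesis unfolding Y1w_def
    by (subst gf_union[OF finl_words finl_words d]) (simp add: gf_single gf_snoc)
qed


definition gR :: "word \<times> (word \<times> word) \<Rightarrow> word \<times> word" where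
  "gR = (\<lambda>(y1, (x1, y2)). (B # x1, y1 @ B # y2))"

lemma split_unique: "a \<notin> set ys \<Longrightarrow> a \<notin> set ys' \<Longrightarrow> ys @ a # zs = ys' @ a # zs' \<Longrightarrow> ys = ys' \<and> zs = zs'"
proof (induction ys arbitrary: ys')
  case Nil then show ?case by (cases ys') auto
next
  case (Cons b ys) then show ?case by (cases ys') auto
qed

lemma leadB_simps[simp]: "leadB [] = 0" "leadB (B # x) = Suc (leadB x)" "a \<noteq> B \<Longrightarrow> leadB (a # x) = 0"
  by (auto simp: leadB_def)

lemma countB_simps[simp]: "countB [] = 0" "countB (xs @ ys) = countB xs + countB ys"
  "countB (a # x) = (if a = B then Suc (countB x) else countB x)"
  by (auto simp: countB_def)

lemma leadB_zero: "x = [] \<or> hd x \<noteq> B \<Longrightarrow> leadB x = 0"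
  by (cases x) auto

lemma countB_pos: "0 < countB y \<Longrightarrow> B \<in> set y"
  by (induction y) (auto split: if_splits)

lemma countB_noB: "B \<notin> set y \<Longrightarrow> countB y = 0"
  by (induction y) auto

lemma Y1w_char: "y1 \<in> Y1w \<longleftrightarrow> set y1 \<subseteq> {C, D} \<and> (y1 = [] \<or> last y1 = D)"
proof
  assume "y1 \<in> Y1w" then show "set y1 \<subseteq> {C, D} \<and> (y1 = [] \<or> last y1 = D)"
    by (auto simp: Y1w_def Yw_def)
next
  assume h: "set y1 \<subseteq> {C, D} \<and> (y1 = [] \<or> last y1 = D)"
  show "y1 \<in> Y1w"
  proof (cases "y1 = []")
    case True then show ?thesis by (simp add: Y1w_def)
  next
    case False
    then have "y1 = butlast y1 @ [D]" using h by (metis append_butlast_last_id)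
    moreover have "butlast y1 \<in> Yw" using h by (auto simp: Yw_def dest: in_set_butlastD)
    ultimately show ?thesis unfolding Y1w_def by blast
  qed
qed

lemma Rw_decomp: "Rw = (Mw \<times> Lw) \<union> gR ` (Y1w \<times> Rw)"
proof (intro equalityI subsetI)
  fix p assume p: "p \<in> Rw"
  obtain x y where pxy: "p = (x, y)" by (cases p)
  have x: "x \<in> Lw" and y: "y \<in> Lw" and le: "leadB x \<le> countB y" using p pxy by (auto simp: Rw_def)
  show "p \<in> (Mw \<times> Lw) \<union> gR ` (Y1w \<times> Rw)"
  proof (cases "x = [] \<or> hd x \<noteq> B")
    case True then show ?thesis using x y pxy by (auto simp: Mw_def)
  next
    case False
    then obtain x1 where x1: "x = B # x1" by (cases x) auto
    then have "0 < countB y" using le by simp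
    then have "B \<in> set y" by (rule countB_pos)
    then obtain y1 y2 where yy: "y = y1 @ B # y2" and nb: "B \<notin> set y1"
      using split_list_first by metis
    have yA: "A \<notin> set y" and ycb: "\<not> has_CB y" using y by (auto simp: Lw_def)
    have "set y1 \<subseteq> {C, D}"
    proof
      fix c assume "c \<in> set y1"
      then show "c \<in> {C, D}" using nb yA yy letter_cases[of c] by auto
    qed
    moreover have "y1 = [] \<or> last y1 = D"
    proof (rule ccontr)
      assume "\<not> (y1 = [] \<or> last y1 = D)"
      then have ne: "y1 \<noteq> []" and nd: "last y1 \<noteq> D" by auto
      have "last y1 = C" using \<open>set y1 \<subseteq> {C, D}\<close> last_in_set[OF ne] nd by auto
      then have "has_CB y" using yy ne by (simp add: has_CB_append)
      then show False using ycb by simp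
    qed
    ultimately have y1: "y1 \<in> Y1w" by (simp add: Y1w_char)
    have x1L: "x1 \<in> Lw" using x x1 by (simp add: Lw_Cons)
    have y2L: "y2 \<in> Lw" using y yy by (auto simp: Lw_def has_CB_append has_CB_Cons)
    have "countB y = Suc (countB y2)" using yy nb by (simp add: countB_noB)
    then have "leadB x1 \<le> countB y2" using le x1 by simp
    then have "(x1, y2) \<in> Rw" using x1L y2L by (simp add: Rw_def)
    then show ?thesis using y1 pxy x1 yy unfolding gR_def by (auto intro!: image_eqI[where x="(y1, (x1, y2))"])
  qed
next
  fix p assume "p \<in> (Mw \<times> Lw) \<union> gR ` (Y1w \<times> Rw)"
  then show "p \<in> Rw"
  proof
    assume "p \<in> Mw \<times> Lw" then show ?thesis
      by (auto simp: Mw_def Rw_def leadB_zero)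
  next
    assume "p \<in> gR ` (Y1w \<times> Rw)"
    then obtain y1 x1 y2 where p: "p = (B # x1, y1 @ B # y2)" and y1: "y1 \<in> Y1w" and r: "(x1, y2) \<in> Rw"
      by (auto simp: gR_def)
    have sy: "set y1 \<subseteq> {C, D}" and ly: "y1 = [] \<or> last y1 = D" using y1 by (auto simp: Y1w_char)
    have "\<not> has_CB y1"
    proof
      assume "has_CB y1"
      then obtain q where "Suc q < length y1" "y1 ! Suc q = B" by (auto simp: has_CB_def)
      then have "B \<in> set y1" by (metis nth_mem Suc_lessD less_imp_le_nat order_le_less_trans lessI)
      then show False using sy by auto
    qed
    moreover have "B \<notin> set y1" "A \<notin> set y1" using sy by auto
    ultimately show ?thesis using p r ly by (auto simp: Rw_def Lw_def has_CB_append has_CB_Cons countB_noB)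
  qed
qed

lemma finl_Rw: "finl szp Rw"
  by (rule finl_subset[OF finl_prod[OF finl_words finl_words]]) auto

lemma gf_R: "gf szp Rw = gf length Mw * gf length Lw + fps_X ^ 2 * (gf length Y1w * gf szp Rw)"
proof -
  have d: "(Mw \<times> Lw) \<inter> gR ` (Y1w \<times> Rw) = {}" by (auto simp: gR_def Mw_def)
  have inj: "inj_on gR (Y1w \<times> Rw)"
  proof (rule inj_onI)
    fix u v assume u: "u \<in> Y1w \<times> Rw" and v: "v \<in> Y1w \<times> Rw" and e: "gR u = gR v"
    obtain y1 x1 y2 where uu: "u = (y1, (x1, y2))" by (cases u) auto
    obtain y1' x1' y2' where vv: "v = (y1', (x1', y2'))" by (cases v) auto
    have "B \<notin> set y1" "B \<notin> set y1'" using u v uu vv by (auto simp: Y1w_char)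
    moreover have "y1 @ B # y2 = y1' @ B # y2'" "x1 = x1'" using e uu vv by (auto simp: gR_def)
    ultimately have "y1 = y1' \<and> y2 = y2'" by (metis split_unique)
    then show "u = v" using uu vv \<open>x1 = x1'\<close> by simp
  qed
  have sz: "\<And>u. u \<in> Y1w \<times> Rw \<Longrightarrow> szp (gR u) = (\<lambda>(a,b). length a + szp b) u + 2"
    by (auto simp: gR_def)
  have fin2: "finl szp (gR ` (Y1w \<times> Rw))"
    by (rule finl_subset[OF finl_prod[OF finl_words finl_words]]) auto
  have fin1: "finl szp (Mw \<times> Lw)" by (rule finl_prod[OF finl_words finl_words])
  have "gf szp Rw = gf szp (Mw \<times> Lw) + gf szp (gR ` (Y1w \<times> Rw))"
    by (subst Rw_decomp) (rule gf_union[OF fin1 fin2 d])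
  also have "gf szp (Mw \<times> Lw) = gf length Mw * gf length Lw"
    by (rule gf_prod[OF finl_words finl_words])
  also have "gf szp (gR ` (Y1w \<times> Rw)) = fps_X ^ 2 * gf (\<lambda>(a,b). length a + szp b) (Y1w \<times> Rw)"
    by (rule gf_image[of gR "Y1w \<times> Rw" szp "\<lambda>(a,b). length a + szp b" 2, OF inj sz])
  also have "gf (\<lambda>(a,b). length a + szp b) (Y1w \<times> Rw) = gf length Y1w * gf szp Rw"
    by (rule gf_prod[OF finl_words finl_Rw])
  finally show ?thesis .
qed


lemma apos_Nil[simp]: "apos [] = []" by (simp add: apos_def)

lemma apos_Cons: "apos (a # x) = (if a = A then 0 # map Suc (apos x) else map Suc (apos x))"
proof -
  have "[0..<length (a # x)] = 0 # map Suc [0..<length x]"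
    by (simp add: upt_conv_Cons map_Suc_upt del: upt_Suc)
  then show ?thesis by (simp add: apos_def filter_map comp_def)
qed

lemma apos_append: "apos (xs @ ys) = apos xs @ map (\<lambda>p. p + length xs) (apos ys)"
  by (induction xs) (auto simp: apos_Cons comp_def)

lemma apos_noA: "A \<notin> set x \<Longrightarrow> apos x = []"
  by (induction x) (auto simp: apos_Cons)

lemma set_apos: "p \<in> set (apos w) \<longleftrightarrow> p < length w \<and> w ! p = A"
  by (auto simp: apos_def)

lemma countA_simps[simp]: "countA [] = 0" "countA (xs @ ys) = countA xs + countA ys"
  "countA (a # x) = (if a = A then Suc (countA x) else countA x)"
  by (auto simp: countA_def)

lemma countA_noA: "A \<notin> set y \<Longrightarrow> countA y = 0"
  by (induction y) auto

lemma countA_pos: "w \<noteq> [] \<Longrightarrow> hd w = A \<Longrightarrow> 0 < countA w"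
  by (cases w) auto

definition trigs :: "word \<Rightarrow> nat list" where
  "trigs w = map (\<lambda>p. if 0 < p \<and> w ! (p - 1) = C then leadB (drop (Suc p) w) else 0) (rev (apos w))"

definition segB :: "word \<Rightarrow> nat list" where
  "segB z = map (\<lambda>q. countB (takeWhile (\<lambda>c. c \<noteq> A) (drop (Suc q) z))) (apos z)"

definition rel :: "nat list \<Rightarrow> nat list \<Rightarrow> bool" where
  "rel ts ss \<longleftrightarrow> (\<forall>i<length ts. 0 < ts ! i \<longrightarrow> i < length ss \<and> ts ! i \<le> ss ! i)"

lemma rel_Nil: "rel [] ss" by (simp add: rel_def)

lemma rel_Cons: "rel (a # ts) (b # ss) \<longleftrightarrow> (0 < a \<longrightarrow> a \<le> b) \<and> rel ts ss"
proof
  assume h: "rel (a # ts) (b # ss)"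
  have "0 < a \<longrightarrow> a \<le> b" using h[unfolded rel_def, rule_format, of 0] by simp
  moreover have "rel ts ss" unfolding rel_def
  proof (intro allI impI)
    fix i assume "i < length ts" "0 < ts ! i"
    then show "i < length ss \<and> ts ! i \<le> ss ! i"
      using h[unfolded rel_def, rule_format, of "Suc i"] by simp
  qed
  ultimately show "(0 < a \<longrightarrow> a \<le> b) \<and> rel ts ss" ..
next
  assume h: "(0 < a \<longrightarrow> a \<le> b) \<and> rel ts ss"
  show "rel (a # ts) (b # ss)" unfolding rel_def
  proof (intro allI impI)
    fix i assume i: "i < length (a # ts)" "0 < (a # ts) ! i"
    show "i < length (b # ss) \<and> (a # ts) ! i \<le> (b # ss) ! i"
    proof (cases i)
      case 0 then show ?thesis using h i by simp
    next
      case (Suc j) then show ?thesis using h i unfolding rel_def by simp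
    qed
  qed
qed

lemma takeWhile_len: "k \<le> length (takeWhile P l) \<longleftrightarrow> k \<le> length l \<and> (\<forall>j<k. P (l ! j))"
proof (induction l arbitrary: k)
  case Nil then show ?case by auto
next
  case (Cons a l)
  show ?case
  proof (cases k)
    case 0 then show ?thesis by simp
  next
    case (Suc k')
    have "(\<forall>j<Suc k'. P ((a # l) ! j)) \<longleftrightarrow> P a \<and> (\<forall>j<k'. P (l ! j))"
      by (auto simp: less_Suc_eq_0_disj)
    then show ?thesis using Cons[of k'] Suc by auto
  qed
qed

lemma run_lemma:
  assumes "1 \<le> k"
  shows "(p + k < length w \<and> (\<forall>j\<in>{1..k}. w ! (p + j) = B)) \<longleftrightarrow> k \<le> leadB (drop (Suc p) w)"
proof -
  have "k \<le> leadB (drop (Suc p) w) \<longleftrightarrow> k \<le> length (drop (Suc p) w) \<and> (\<forall>j<k. drop (Suc p) w ! j = B)"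
    unfolding leadB_def by (rule takeWhile_len)
  also have "\<dots> \<longleftrightarrow> p + k < length w \<and> (\<forall>j<k. w ! (Suc p + j) = B)"
    using assms by auto
  also have "(\<forall>j<k. w ! (Suc p + j) = B) \<longleftrightarrow> (\<forall>j\<in>{1..k}. w ! (p + j) = B)"
  proof
    assume h: "\<forall>j<k. w ! (Suc p + j) = B"
    show "\<forall>j\<in>{1..k}. w ! (p + j) = B"
    proof
      fix j assume "j \<in> {1..k}"
      then have "j - 1 < k" "Suc p + (j - 1) = p + j" by auto
      then show "w ! (p + j) = B" using h by metis
    qed
  next
    assume h: "\<forall>j\<in>{1..k}. w ! (p + j) = B"
    show "\<forall>j<k. w ! (Suc p + j) = B"
    proof (intro allI impI)
      fix j assume "j < k"
      then have "Suc j \<in> {1..k}" "Suc p + j = p + Suc j" by auto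
      then show "w ! (Suc p + j) = B" using h by metis
    qed
  qed
  finally show ?thesis by simp
qed

lemma cond_iv_rel: "cond_iv w z \<longleftrightarrow> rel (trigs w) (segB z)"
proof
  assume h: "cond_iv w z"
  show "rel (trigs w) (segB z)" unfolding rel_def
  proof (intro allI impI)
    fix i assume i: "i < length (trigs w)" and pos: "0 < trigs w ! i"
    define p where "p = rev (apos w) ! i"
    have il: "i < length (apos w)" using i by (simp add: trigs_def)
    have tw: "trigs w ! i = (if 0 < p \<and> w ! (p - 1) = C then leadB (drop (Suc p) w) else 0)"
      using il unfolding trigs_def p_def by simp
    then have trig: "0 < p \<and> w ! (p - 1) = C" and r: "0 < leadB (drop (Suc p) w)"
      using pos by (auto split: if_splits)
    define k where "k = leadB (drop (Suc p) w)"
    have k1: "1 \<le> k" using r k_def by simp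
    have run: "p + k < length w \<and> (\<forall>j\<in>{1..k}. w ! (p + j) = B)"
      using run_lemma[OF k1, of p w] k_def by simp
    have "Suc i \<le> length (apos z) \<and> k \<le> countB (segment z (Suc i))"
      using h[unfolded cond_iv_def, rule_format, of "Suc i" k] il trig run k1
      by (simp add: p_def Let_def)
    then show "i < length (segB z) \<and> trigs w ! i \<le> segB z ! i"
      using tw trig k_def by (simp add: segB_def segment_def Let_def)
  qed
next
  assume h: "rel (trigs w) (segB z)"
  show "cond_iv w z" unfolding cond_iv_def
  proof (intro allI impI)
    fix i k assume i1: "1 \<le> i" and k1: "1 \<le> k" and il: "i \<le> length (apos w)"
      and c: "let p = rev (apos w) ! (i - 1) in 0 < p \<and> w ! (p - 1) = C \<and> p + k < length w \<and> (\<forall>j\<in>{1..k}. w ! (p + j) = B)"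
    obtain i' where ii: "i = Suc i'" using i1 by (cases i) auto
    define p where "p = rev (apos w) ! i'"
    have trig: "0 < p \<and> w ! (p - 1) = C" and run: "p + k < length w \<and> (\<forall>j\<in>{1..k}. w ! (p + j) = B)"
      using c ii p_def by (auto simp: Let_def)
    have kr: "k \<le> leadB (drop (Suc p) w)" using run_lemma[OF k1] run by blast
    have il': "i' < length (apos w)" using il ii by simp
    have tw: "trigs w ! i' = leadB (drop (Suc p) w)"
      using il' trig unfolding trigs_def p_def by simp
    have hh: "i' < length (segB z) \<and> trigs w ! i' \<le> segB z ! i'"
      using h[unfolded rel_def, rule_format, of i'] il' tw kr k1 by (simp add: trigs_def)
    then have l: "i' < length (apos z)" by (simp add: segB_def)
    have sb: "segB z ! i' = countB (takeWhile (\<lambda>c. c \<noteq> A) (drop (Suc (apos z ! i')) z))"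
      using l by (simp add: segB_def)
    show "i \<le> length (apos z) \<and> k \<le> countB (segment z i)"
      using hh sb tw kr ii l by (simp add: segment_def Let_def)
  qed
qed

lemma leadB_append_A: "leadB (l @ A # x) = leadB l"
  by (induction l) (auto simp: leadB_def)

lemma trigs_snoc:
  assumes "A \<notin> set x"
  shows "trigs (w' @ A # x) = (if endC w' then leadB x else 0) # trigs w'"
proof -
  have ap: "apos (w' @ A # x) = apos w' @ [length w']"
    using assms by (simp add: apos_append apos_Cons apos_noA)
  have head: "(if 0 < length w' \<and> (w' @ A # x) ! (length w' - 1) = C then leadB (drop (Suc (length w')) (w' @ A # x)) else 0)
      = (if endC w' then leadB x else 0)"
  proof (cases "w' = []")
    case True then show ?thesis by (simp add: endC_def)
  next
    case False
    then have "(w' @ A # x) ! (length w' - 1) = last w'"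
      by (simp add: nth_append last_conv_nth)
    then show ?thesis using False by (simp add: endC_def)
  qed
  have tail: "map (\<lambda>p. if 0 < p \<and> (w' @ A # x) ! (p - 1) = C then leadB (drop (Suc p) (w' @ A # x)) else 0) (rev (apos w'))
     = map (\<lambda>p. if 0 < p \<and> w' ! (p - 1) = C then leadB (drop (Suc p) w') else 0) (rev (apos w'))"
  proof (rule map_cong[OF refl])
    fix p assume "p \<in> set (rev (apos w'))"
    then have pl: "p < length w'" by (simp add: set_apos)
    then have pl1: "p - 1 < length w'" by simp
    then have n1: "0 < p \<Longrightarrow> (w' @ A # x) ! (p - 1) = w' ! (p - 1)" by (simp add: nth_append)
    have n2: "drop (Suc p) (w' @ A # x) = drop (Suc p) w' @ A # x" using pl by simp
    show "(if 0 < p \<and> (w' @ A # x) ! (p - 1) = C then leadB (drop (Suc p) (w' @ A # x)) else 0)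
      = (if 0 < p \<and> w' ! (p - 1) = C then leadB (drop (Suc p) w') else 0)"
      using n1 n2 by (cases "0 < p") (simp_all add: leadB_append_A)
  qed
  show ?thesis unfolding trigs_def ap using head tail by simp
qed

lemma takeWhile_notA: "A \<notin> set y \<Longrightarrow> (z = [] \<or> hd z = A) \<Longrightarrow> takeWhile (\<lambda>c. c \<noteq> A) (y @ z) = y"
proof -
  assume a: "A \<notin> set y" "z = [] \<or> hd z = A"
  have "takeWhile (\<lambda>c. c \<noteq> A) (y @ z) = y @ takeWhile (\<lambda>c. c \<noteq> A) z"
    by (rule takeWhile_append2) (use a in auto)
  then show ?thesis using a(2) by (cases z) auto
qed

lemma segB_cons:
  assumes "A \<notin> set y" "z' = [] \<or> hd z' = A"
  shows "segB ((A # y) @ z') = countB y # segB z'"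
proof -
  have ap: "apos ((A # y) @ z') = 0 # map (\<lambda>q. Suc (q + length y)) (apos z')"
    using assms by (simp add: apos_append apos_Cons apos_noA comp_def)
  have h0: "countB (takeWhile (\<lambda>c. c \<noteq> A) (drop (Suc 0) ((A # y) @ z'))) = countB y"
    using takeWhile_notA[OF assms] by simp
  have ht: "\<And>q. drop (Suc (Suc (q + length y))) ((A # y) @ z') = drop (Suc q) z'"
    by simp
  show ?thesis unfolding segB_def ap using h0 ht by (simp add: comp_def)
qed

lemma endC_snoc: "endC (w' @ A # x) = endC x"
  by (cases x rule: rev_cases) (auto simp: endC_def)

lemma has_CB_A: "has_CB (A # x) = has_CB x" by (simp add: has_CB_Cons)

lemma good_step:
  assumes x: "A \<notin> set x" and y: "A \<notin> set y" and w': "w' \<noteq> []" "hd w' = A"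
    and z': "z' \<noteq> []" "hd z' = A"
  shows "good_pair (w' @ A # x) ((A # y) @ z') \<longleftrightarrow>
    good_pair w' z' \<and> x \<in> Lw \<and> y \<in> Lw \<and> (endC w' \<longrightarrow> leadB x \<le> countB y)"
proof -
  have cA: "countA (w' @ A # x) = countA ((A # y) @ z') \<longleftrightarrow> countA w' = countA z'"
    using x y by (simp add: countA_noA)
  have cb1: "has_CB (w' @ A # x) \<longleftrightarrow> has_CB w' \<or> has_CB x"
    by (simp add: has_CB_append has_CB_A)
  have cb2: "has_CB ((A # y) @ z') \<longleftrightarrow> has_CB y \<or> has_CB z'"
    using z' by (simp add: has_CB_append has_CB_A)
  have ci: "cond_iv (w' @ A # x) ((A # y) @ z') \<longleftrightarrow> cond_iv w' z' \<and> (endC w' \<longrightarrow> leadB x \<le> countB y)"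
  proof -
    have s: "segB (A # y @ z') = countB y # segB z'" using segB_cons[OF y] z' by simp
    show ?thesis by (auto simp: cond_iv_rel trigs_snoc[OF x] s rel_Cons)
  qed
  show ?thesis using w' z' x y cA cb1 cb2 ci by (auto simp: good_pair_def Lw_def)
qed

lemma trigs_Nil[simp]: "trigs [] = []" by (simp add: trigs_def)
lemma segB_Nil[simp]: "segB [] = []" by (simp add: segB_def)

lemma good_base:
  assumes x: "A \<notin> set x" and y: "A \<notin> set y"
  shows "good_pair (A # x) (A # y) \<longleftrightarrow> x \<in> Lw \<and> y \<in> Lw"
proof -
  have t: "trigs (A # x) = [0]" using trigs_snoc[OF x, of "[]"] by (simp add: endC_def)
  have s: "segB (A # y) = [countB y]" using segB_cons[OF y, of "[]"] by simp
  have "cond_iv (A # x) (A # y)" by (simp add: cond_iv_rel t s rel_Cons rel_Nil)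
  then show ?thesis using x y by (auto simp: good_pair_def Lw_def has_CB_A countA_noA)
qed

lemma good_decomp:
  assumes g: "good_pair w z"
  shows "(\<exists>x y. w = A # x \<and> z = A # y \<and> x \<in> Lw \<and> y \<in> Lw) \<or>
    (\<exists>w' z' x y. w = w' @ A # x \<and> z = (A # y) @ z' \<and> good_pair w' z' \<and> x \<in> Lw \<and> y \<in> Lw
       \<and> (endC w' \<longrightarrow> leadB x \<le> countB y))"
proof -
  have w: "w \<noteq> []" "hd w = A" and z: "z \<noteq> []" "hd z = A" and cA: "countA w = countA z"
    using g by (auto simp: good_pair_def)
  have "A \<in> set w" using w by (cases w) auto
  then obtain w' x where wx: "w = w' @ A # x" and x: "A \<notin> set x" using split_list_last by metis
  obtain r where zr: "z = A # r" using z by (cases z) auto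
  define y where "y = takeWhile (\<lambda>c. c \<noteq> A) r"
  define z' where "z' = dropWhile (\<lambda>c. c \<noteq> A) r"
  have zyz: "z = (A # y) @ z'" using zr y_def z'_def by simp
  have y: "A \<notin> set y" unfolding y_def by (auto dest: set_takeWhileD)
  have z'h: "z' = [] \<or> hd z' = A" unfolding z'_def using hd_dropWhile[of "\<lambda>c. c \<noteq> A" r] by auto
  have cA': "countA w' = countA z'" using cA wx zyz x y by (simp add: countA_noA)
  show ?thesis
  proof (cases "w' = []")
    case True
    then have "countA z' = 0" using cA' by simp
    then have "z' = []" using z'h countA_pos by fastforce
    then have "w = A # x" "z = A # y" using True wx zyz by auto
    then show ?thesis using g good_base[OF x y] by auto
  next
    case False
    then have hw': "hd w' = A" using w wx by simp
    then have "0 < countA z'" using cA' countA_pos[OF False] by simp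
    then have nz: "z' \<noteq> []" by auto
    then have hz': "hd z' = A" using z'h by simp
    have "good_pair w' z' \<and> x \<in> Lw \<and> y \<in> Lw \<and> (endC w' \<longrightarrow> leadB x \<le> countB y)"
      using good_step[OF x y False hw' nz hz'] g wx zyz by simp
    then show ?thesis using wx zyz by blast
  qed
qed


definition Gw :: "(word \<times> word) set" where "Gw = {(w, z). good_pair w z}"
definition Gs :: "bool \<Rightarrow> (word \<times> word) set" where "Gs e = {p \<in> Gw. endC (fst p) = e}"
definition P0 :: "bool \<Rightarrow> (word \<times> word) set" where "P0 e = {(x, y). x \<in> Lw \<and> y \<in> Lw \<and> endC x = e}"
definition P1 :: "bool \<Rightarrow> (word \<times> word) set" where "P1 e = {p \<in> Rw. endC (fst p) = e}"
definition bmap :: "word \<times> word \<Rightarrow> word \<times> word" where "bmap p = (A # fst p, A # snd p)"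
definition hmap :: "(word \<times> word) \<times> (word \<times> word) \<Rightarrow> word \<times> word" where
  "hmap = (\<lambda>((w', z'), (x, y)). (w' @ A # x, (A # y) @ z'))"
definition Dom :: "((word \<times> word) \<times> (word \<times> word)) set" where
  "Dom = {((w', z'), (x, y)). good_pair w' z' \<and> x \<in> Lw \<and> y \<in> Lw}"

lemma Lw_noA: "x \<in> Lw \<Longrightarrow> A \<notin> set x" by (simp add: Lw_def)

lemma endC_Cons_A: "endC (A # x) = endC x"
  using endC_snoc[of "[]" x] by simp

lemma hmap_inj: "inj_on hmap Dom"
proof (rule inj_onI)
  fix u v assume u: "u \<in> Dom" and v: "v \<in> Dom" and e: "hmap u = hmap v"
  obtain w1 z1 x1 y1 where uu: "u = ((w1, z1), (x1, y1))" by (metis prod.collapse)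
  obtain w2 z2 x2 y2 where vv: "v = ((w2, z2), (x2, y2))" by (metis prod.collapse)
  have g1: "good_pair w1 z1" "x1 \<in> Lw" "y1 \<in> Lw" using u uu by (auto simp: Dom_def)
  have g2: "good_pair w2 z2" "x2 \<in> Lw" "y2 \<in> Lw" using v vv by (auto simp: Dom_def)
  have ew: "w1 @ A # x1 = w2 @ A # x2" and ez: "y1 @ z1 = y2 @ z2" using e uu vv by (auto simp: hmap_def)
  have "rev x1 @ A # rev w1 = rev x2 @ A # rev w2" using ew by (metis rev.simps(2) rev_append rev_rev_ident append_assoc append_Cons append_Nil)
  moreover have "A \<notin> set (rev x1)" "A \<notin> set (rev x2)" using g1 g2 by (auto simp: Lw_def)
  ultimately have "rev x1 = rev x2 \<and> rev w1 = rev w2" using split_unique by metis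
  then have wx: "x1 = x2" "w1 = w2" by auto
  have h1: "z1 = [] \<or> hd z1 = A" "z2 = [] \<or> hd z2 = A" using g1 g2 by (auto simp: good_pair_def)
  have "y1 = y2" using takeWhile_notA[OF Lw_noA[OF g1(3)] h1(1)] takeWhile_notA[OF Lw_noA[OF g2(3)] h1(2)] ez by simp
  then have "z1 = z2" using ez by simp
  then show "u = v" using uu vv wx \<open>y1 = y2\<close> by simp
qed

lemma G_decomp: "Gs e = bmap ` P0 e \<union> hmap ` (Gs False \<times> P0 e) \<union> hmap ` (Gs True \<times> P1 e)"
proof (intro equalityI subsetI)
  fix p assume p: "p \<in> Gs e"
  obtain w z where pwz: "p = (w, z)" by (cases p)
  have g: "good_pair w z" and ew: "endC w = e" using p pwz by (auto simp: Gs_def Gw_def)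
  from good_decomp[OF g] show "p \<in> bmap ` P0 e \<union> hmap ` (Gs False \<times> P0 e) \<union> hmap ` (Gs True \<times> P1 e)"
  proof
    assume "\<exists>x y. w = A # x \<and> z = A # y \<and> x \<in> Lw \<and> y \<in> Lw"
    then obtain x y where h: "w = A # x" "z = A # y" "x \<in> Lw" "y \<in> Lw" by blast
    then have "(x, y) \<in> P0 e" using ew by (simp add: P0_def endC_Cons_A)
    then show ?thesis using h pwz by (auto simp: bmap_def intro!: image_eqI[where x="(x,y)"])
  next
    assume "\<exists>w' z' x y. w = w' @ A # x \<and> z = (A # y) @ z' \<and> good_pair w' z' \<and> x \<in> Lw \<and> y \<in> Lw
       \<and> (endC w' \<longrightarrow> leadB x \<le> countB y)"
    then obtain w' z' x y where h: "w = w' @ A # x" "z = (A # y) @ z'" "good_pair w' z'" "x \<in> Lw" "y \<in> Lw"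
       "endC w' \<longrightarrow> leadB x \<le> countB y" by blast
    have ex: "endC x = e" using ew h(1) by (simp add: endC_snoc)
    have hm: "p = hmap ((w', z'), (x, y))" using pwz h by (simp add: hmap_def)
    show ?thesis
    proof (cases "endC w'")
      case True
      then have "(w', z') \<in> Gs True" "(x, y) \<in> P1 e" using h ex by (auto simp: Gs_def Gw_def P1_def Rw_def)
      then show ?thesis using hm by blast
    next
      case False
      then have "(w', z') \<in> Gs False" "(x, y) \<in> P0 e" using h ex by (auto simp: Gs_def Gw_def P0_def)
      then show ?thesis using hm by blast
    qed
  qed
next
  fix p assume p: "p \<in> bmap ` P0 e \<union> hmap ` (Gs False \<times> P0 e) \<union> hmap ` (Gs True \<times> P1 e)"
  have step: "hmap ((w', z'), (x, y)) \<in> Gs e"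
    if g: "good_pair w' z'" and x: "x \<in> Lw" and y: "y \<in> Lw" and c: "endC w' \<longrightarrow> leadB x \<le> countB y"
      and ex: "endC x = e" for w' z' x y
  proof -
    have w': "w' \<noteq> []" "hd w' = A" and z': "z' \<noteq> []" "hd z' = A" using g by (auto simp: good_pair_def)
    have "good_pair (w' @ A # x) ((A # y) @ z')"
      using good_step[OF Lw_noA[OF x] Lw_noA[OF y] w' z'] g x y c by simp
    then show ?thesis using ex by (simp add: hmap_def Gs_def Gw_def endC_snoc)
  qed
  from p show "p \<in> Gs e"
  proof (elim UnE)
    assume "p \<in> bmap ` P0 e"
    then obtain x y where h: "p = (A # x, A # y)" "x \<in> Lw" "y \<in> Lw" "endC x = e"
      by (auto simp: bmap_def P0_def)
    then show ?thesis using good_base[OF Lw_noA[OF h(2)] Lw_noA[OF h(3)]]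
      by (simp add: Gs_def Gw_def endC_Cons_A)
  next
    assume "p \<in> hmap ` (Gs False \<times> P0 e)"
    then obtain w' z' x y where h: "p = hmap ((w', z'), (x, y))" "good_pair w' z'" "x \<in> Lw" "y \<in> Lw" "endC x = e"
      "\<not> endC w'"
      by (auto simp: Gs_def Gw_def P0_def)
    then show ?thesis using step by blast
  next
    assume "p \<in> hmap ` (Gs True \<times> P1 e)"
    then obtain w' z' x y where h: "p = hmap ((w', z'), (x, y))" "good_pair w' z'" "x \<in> Lw" "y \<in> Lw" "endC x = e"
      "leadB x \<le> countB y"
      by (auto simp: Gs_def Gw_def P1_def Rw_def)
    then show ?thesis using step by blast
  qed
qed

lemma finl_pairs: "finl szp (S :: (word \<times> word) set)"
  by (rule finl_subset[OF finl_prod[OF finl_words finl_words]]) auto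

lemma countA_bmap: "q \<in> P0 e \<Longrightarrow> countA (fst (bmap q)) = 1"
  by (auto simp: bmap_def P0_def Lw_def countA_noA)

lemma countA_hmap: "u \<in> Dom \<Longrightarrow> 2 \<le> countA (fst (hmap u))"
proof -
  assume u: "u \<in> Dom"
  obtain w z x y where uu: "u = ((w, z), (x, y))" by (metis prod.collapse)
  then have "w \<noteq> []" "hd w = A" using u by (auto simp: Dom_def good_pair_def)
  then have "0 < countA w" by (rule countA_pos)
  then show ?thesis using uu by (simp add: hmap_def)
qed

lemma GsF_Dom: "Gs b \<times> P0 e \<subseteq> Dom" by (auto simp: Gs_def Gw_def P0_def Dom_def)
lemma GsT_Dom: "Gs b \<times> P1 e \<subseteq> Dom" by (auto simp: Gs_def Gw_def P1_def Rw_def Dom_def)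

lemma gf_Gs: "gf szp (Gs e) = fps_X ^ 2 * gf szp (P0 e) + fps_X ^ 2 * (gf szp (Gs False) * gf szp (P0 e))
    + fps_X ^ 2 * (gf szp (Gs True) * gf szp (P1 e))"
proof -
  have d1: "bmap ` P0 e \<inter> hmap ` (Gs False \<times> P0 e) = {}"
    using countA_bmap countA_hmap GsF_Dom by fastforce
  have d2: "(bmap ` P0 e \<union> hmap ` (Gs False \<times> P0 e)) \<inter> hmap ` (Gs True \<times> P1 e) = {}"
  proof -
    have "bmap ` P0 e \<inter> hmap ` (Gs True \<times> P1 e) = {}"
      using countA_bmap countA_hmap GsT_Dom by fastforce
    moreover have "hmap ` (Gs False \<times> P0 e) \<inter> hmap ` (Gs True \<times> P1 e) = {}"
    proof (rule ccontr)
      assume "hmap ` (Gs False \<times> P0 e) \<inter> hmap ` (Gs True \<times> P1 e) \<noteq> {}"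
      then obtain q where q1: "q \<in> hmap ` (Gs False \<times> P0 e)" and q2: "q \<in> hmap ` (Gs True \<times> P1 e)" by blast
      from q1 obtain u where u: "u \<in> Gs False \<times> P0 e" and qu: "q = hmap u" by (rule imageE)
      from q2 obtain v where v: "v \<in> Gs True \<times> P1 e" and qv: "q = hmap v" by (rule imageE)
      have e: "hmap u = hmap v" using qu qv by simp
      have "u = v" using inj_onD[OF hmap_inj e] u v GsF_Dom GsT_Dom by blast
      then show False using u v by (auto simp: Gs_def)
    qed
    ultimately show ?thesis by blast
  qed
  have ib: "inj_on bmap (P0 e)" by (auto simp: inj_on_def bmap_def prod_eq_iff)
  have sb: "\<And>q. q \<in> P0 e \<Longrightarrow> szp (bmap q) = szp q + 2" by (auto simp: bmap_def)
  have sh: "\<And>u. u \<in> S \<Longrightarrow> szp (hmap u) = (\<lambda>(a,b). szp a + szp b) u + 2" for S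
    by (auto simp: hmap_def)
  have "gf szp (Gs e) = gf szp (bmap ` P0 e) + gf szp (hmap ` (Gs False \<times> P0 e)) + gf szp (hmap ` (Gs True \<times> P1 e))"
    by (subst G_decomp) (simp only: gf_union[OF finl_pairs finl_pairs d2] gf_union[OF finl_pairs finl_pairs d1])
  also have "gf szp (bmap ` P0 e) = fps_X ^ 2 * gf szp (P0 e)"
    by (rule gf_image[of bmap _ szp szp 2, OF ib sb])
  also have "gf szp (hmap ` (Gs False \<times> P0 e)) = fps_X ^ 2 * gf (\<lambda>(a,b). szp a + szp b) (Gs False \<times> P0 e)"
    by (rule gf_image[of hmap _ szp "\<lambda>(a,b). szp a + szp b" 2, OF inj_on_subset[OF hmap_inj GsF_Dom] sh])
  also have "gf (\<lambda>(a,b). szp a + szp b) (Gs False \<times> P0 e) = gf szp (Gs False) * gf szp (P0 e)"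
    by (rule gf_prod[OF finl_pairs finl_pairs])
  also have "gf szp (hmap ` (Gs True \<times> P1 e)) = fps_X ^ 2 * gf (\<lambda>(a,b). szp a + szp b) (Gs True \<times> P1 e)"
    by (rule gf_image[of hmap _ szp "\<lambda>(a,b). szp a + szp b" 2, OF inj_on_subset[OF hmap_inj GsT_Dom] sh])
  also have "gf (\<lambda>(a,b). szp a + szp b) (Gs True \<times> P1 e) = gf szp (Gs True) * gf szp (P1 e)"
    by (rule gf_prod[OF finl_pairs finl_pairs])
  finally show ?thesis .
qed


definition L1w :: "word set" where "L1w = {x \<in> Lw. endC x}"

lemma Lw_snocC: "x @ [C] \<in> Lw \<longleftrightarrow> x \<in> Lw"
  by (auto simp: Lw_def has_CB_append has_CB_Cons)

lemma leadB_snocC: "leadB (x @ [C]) = leadB x"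
  by (induction x) (auto simp: leadB_def)

lemma L1w_eq: "L1w = (\<lambda>x. x @ [C]) ` Lw"
proof (intro equalityI subsetI)
  fix x assume x: "x \<in> L1w"
  then have ne: "x \<noteq> []" and l: "last x = C" and xl: "x \<in> Lw" by (auto simp: L1w_def endC_def)
  have e: "x = butlast x @ [C]" using ne l by (metis append_butlast_last_id)
  then have "butlast x \<in> Lw" using xl Lw_snocC by metis
  then show "x \<in> (\<lambda>x. x @ [C]) ` Lw" using e by blast
qed (auto simp: L1w_def Lw_snocC endC_def)

lemma gf_L1: "gf length L1w = fps_X * gf length Lw"
  by (simp add: L1w_eq gf_snoc)

lemma P0T: "P0 True = L1w \<times> Lw" by (auto simp: P0_def L1w_def)
lemma P0F: "P0 False = (Lw - L1w) \<times> Lw" by (auto simp: P0_def L1w_def)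

lemma gf_P0T: "gf szp (P0 True) = fps_X * gf length Lw * gf length Lw"
  by (simp add: P0T gf_prod[OF finl_words finl_words] gf_L1)

lemma gf_P0F: "gf szp (P0 False) = (gf length Lw - fps_X * gf length Lw) * gf length Lw"
proof -
  have sub: "L1w \<subseteq> Lw" by (auto simp: L1w_def)
  show ?thesis by (simp add: P0F gf_prod[OF finl_words finl_words] gf_diff[OF finl_words sub] gf_L1)
qed

lemma P1T: "P1 True = (\<lambda>(x, y). (x @ [C], y)) ` Rw"
proof (intro equalityI subsetI)
  fix p assume p: "p \<in> P1 True"
  obtain x y where pxy: "p = (x, y)" by (cases p)
  have r: "(x, y) \<in> Rw" and ne: "x \<noteq> []" and l: "last x = C" using p pxy by (auto simp: P1_def endC_def)
  have e: "x = butlast x @ [C]" using ne l by (metis append_butlast_last_id)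
  then have "(butlast x, y) \<in> Rw" using r Lw_snocC leadB_snocC unfolding Rw_def by (metis (no_types, lifting) case_prodD case_prodI mem_Collect_eq)
  then show "p \<in> (\<lambda>(x, y). (x @ [C], y)) ` Rw" using e pxy by (auto intro!: image_eqI[where x="(butlast x, y)"])
qed (auto simp: P1_def Rw_def Lw_snocC leadB_snocC endC_def)

lemma gf_P1T: "gf szp (P1 True) = fps_X * gf szp Rw"
proof -
  have inj: "inj_on (\<lambda>(x, y). (x @ [C], y)) Rw" by (auto simp: inj_on_def)
  have sz: "\<And>p. p \<in> Rw \<Longrightarrow> szp ((\<lambda>(x, y). (x @ [C], y)) p) = szp p + 1" by auto
  show ?thesis unfolding P1T using gf_image[of _ Rw szp szp 1, OF inj sz] by simp
qed

lemma gf_P1F: "gf szp (P1 False) = gf szp Rw - fps_X * gf szp Rw"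
proof -
  have e: "P1 False = Rw - P1 True" by (auto simp: P1_def)
  have sub: "P1 True \<subseteq> Rw" by (auto simp: P1_def)
  show ?thesis by (simp add: e gf_diff[OF finl_Rw sub] gf_P1T)
qed

lemma gf_Gw: "gf szp Gw = gf szp (Gs False) + gf szp (Gs True)"
proof -
  have e: "Gw = Gs False \<union> Gs True" by (auto simp: Gs_def)
  have d: "Gs False \<inter> Gs True = {}" by (auto simp: Gs_def)
  show ?thesis unfolding e by (rule gf_union[OF finl_pairs finl_pairs d])
qed

lemma alg:
  fixes X L Y Y1 R a b :: "real fps"
  assumes hL: "L = 1 + 2*X*L + X*(L - X*L)"
  and hY: "Y = 1 + 2*X*Y" and hY1: "Y1 = 1 + X*Y"
  and hR: "R = (L - X*L)*L + X^2*(Y1*R)"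
  and ha: "a = X^2*((L - X*L)*L) + X^2*(a*((L - X*L)*L)) + X^2*(b*(R - X*R))"
  and hb: "b = X^2*(X*L*L) + X^2*(a*(X*L*L)) + X^2*(b*(X*R))"
  and hF: "(1-8*X+22*X^2-21*X^3-4*X^4+15*X^5-7*X^6+X^7) \<noteq> 0"
  shows "(a+b) * (1 - 8 * X + 21 * X ^ 2 - 19 * X ^ 3 - 2 * X ^ 4 + 11 * X ^ 5
      - 6 * X ^ 6 + X ^ 7) = X ^ 2 * (1 - 2 * X - X ^ 2 + X ^ 3)"
proof -
  define u where "u = 1 - 3*X + X^2"
  define q where "q = 1 - 2*X - X^2 + X^3"
  have s1: "L*u = 1" using hL unfolding u_def by algebra
  have s2: "Y*(1-2*X) = 1" using hY by algebra
  have s3: "Y1*(1-2*X) = 1 - X" using hY1 s2 by algebra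
  have s4: "R*q = (1-X)*(1-2*X)*L^2" using hR s3 unfolding q_def by algebra
  have s5: "R*q*u^2 = (1-X)*(1-2*X)" using s4 s1 by algebra
  have s1': "L^2*u^2 = 1" using s1 by algebra
  have s6: "a * (q*u^2 - X^2*(1-X)*q) - b * (X^2*(1-X)^2*(1-2*X)) = X^2*(1-X)*q"
  proof -
    have "a*(q*u^2) = (X^2*((L - X*L)*L) + X^2*(a*((L - X*L)*L)) + X^2*(b*(R - X*R)))*(q*u^2)"
      using ha by simp
    also have "\<dots> = X^2*(1-X)*q*(L^2*u^2) + X^2*a*(1-X)*q*(L^2*u^2) + X^2*b*(1-X)*(R*q*u^2)"
      by algebra
    also have "\<dots> = X^2*(1-X)*q + X^2*a*(1-X)*q + X^2*b*(1-X)*((1-X)*(1-2*X))"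
      by (simp only: s1' s5 mult_1_right)
    finally show ?thesis by algebra
  qed
  have s7: "b * (q*u^2 - X^3*(1-X)*(1-2*X)) - a * (X^3*q) = X^3*q"
  proof -
    have "b*(q*u^2) = (X^2*(X*L*L) + X^2*(a*(X*L*L)) + X^2*(b*(X*R)))*(q*u^2)"
      using hb by simp
    also have "\<dots> = X^3*q*(L^2*u^2) + X^3*a*q*(L^2*u^2) + X^3*b*(R*q*u^2)"
      by algebra
    also have "\<dots> = X^3*q + X^3*a*q + X^3*b*((1-X)*(1-2*X))"
      by (simp only: s1' s5 mult_1_right)
    finally show ?thesis by algebra
  qed
  have s8: "(a+b)*((1 - 8 * X + 21 * X ^ 2 - 19 * X ^ 3 - 2 * X ^ 4 + 11 * X ^ 5
      - 6 * X ^ 6 + X ^ 7)*(1-8*X+22*X^2-21*X^3-4*X^4+15*X^5-7*X^6+X^7))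
     = (X ^ 2 * (1 - 2 * X - X ^ 2 + X ^ 3))*(1-8*X+22*X^2-21*X^3-4*X^4+15*X^5-7*X^6+X^7)"
    using s6 s7 unfolding u_def q_def by algebra
  show ?thesis using s8 hF by (simp add: mult.assoc[symmetric])
qed

lemma nz1: "(1-8*fps_X+22*fps_X^2-21*fps_X^3-4*fps_X^4+15*fps_X^5-7*fps_X^6+fps_X^7 :: real fps) \<noteq> 0"
proof
  assume h: "(1-8*fps_X+22*fps_X^2-21*fps_X^3-4*fps_X^4+15*fps_X^5-7*fps_X^6+fps_X^7 :: real fps) = 0"
  have "fps_nth (1-8*fps_X+22*fps_X^2-21*fps_X^3-4*fps_X^4+15*fps_X^5-7*fps_X^6+fps_X^7 :: real fps) 0 = 1"
    by simp
  then show False using h by simp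
qed

lemma nz2: "(1 - 8 * fps_X + 21 * fps_X ^ 2 - 19 * fps_X ^ 3 - 2 * fps_X ^ 4 + 11 * fps_X ^ 5
      - 6 * fps_X ^ 6 + fps_X ^ 7 :: real fps) \<noteq> 0"
proof
  assume h: "(1 - 8 * fps_X + 21 * fps_X ^ 2 - 19 * fps_X ^ 3 - 2 * fps_X ^ 4 + 11 * fps_X ^ 5
      - 6 * fps_X ^ 6 + fps_X ^ 7 :: real fps) = 0"
  have "fps_nth (1 - 8 * fps_X + 21 * fps_X ^ 2 - 19 * fps_X ^ 3 - 2 * fps_X ^ 4 + 11 * fps_X ^ 5
      - 6 * fps_X ^ 6 + fps_X ^ 7 :: real fps) 0 = 1"
    by simp
  then show False using h by simp
qed

lemma lhs_eq: "Abs_fps (\<lambda>n. if 2 \<le> n then real (t_count n) else 0) = gf szp Gw"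
proof (rule fps_ext)
  fix n
  have e: "{p \<in> Gw. szp p = n} = {(w, z). length w + length z = n \<and> good_pair w z}"
    by (auto simp: Gw_def)
  have small: "n < 2 \<Longrightarrow> {(w, z). length w + length z = n \<and> good_pair w z} = {}"
  proof -
    assume n: "n < 2"
    { fix w z assume "good_pair w z" "length w + length z = n"
      then have "w \<noteq> []" "z \<noteq> []" "length w + length z = n" by (auto simp: good_pair_def)
      then have False using n by (cases w; cases z) auto }
    then show ?thesis by auto
  qed
  show "fps_nth (Abs_fps (\<lambda>n. if 2 \<le> n then real (t_count n) else 0)) n = fps_nth (gf szp Gw) n"
  proof (cases "2 \<le> n")
    case True then show ?thesis by (simp add: gf_nth e t_count_def)
  next
    case False
    then have "{(w, z). length w + length z = n \<and> good_pair w z} = {}" using small by simp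
    then have c: "card {(w, z). length w + length z = n \<and> good_pair w z} = 0" by (metis card.empty)
    show ?thesis using False unfolding gf_nth e fps_nth_Abs_fps c by simp
  qed
qed

theorem mainTheorem10:
  shows "Abs_fps (\<lambda>n. if 2 \<le> n then real (t_count n) else 0) =
    fps_X ^ 2 * (1 - 2 * fps_X - fps_X ^ 2 + fps_X ^ 3) /
    (1 - 8 * fps_X + 21 * fps_X ^ 2 - 19 * fps_X ^ 3 - 2 * fps_X ^ 4 + 11 * fps_X ^ 5
      - 6 * fps_X ^ 6 + fps_X ^ 7)"
proof -
  have hR: "gf szp Rw = (gf length Lw - fps_X * gf length Lw) * gf length Lw + fps_X ^ 2 * (gf length Y1w * gf szp Rw)"
    using gf_R gf_M by simp
  have ha: "gf szp (Gs False) = fps_X^2*((gf length Lw - fps_X*gf length Lw)*gf length Lw)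
     + fps_X^2*(gf szp (Gs False)*((gf length Lw - fps_X*gf length Lw)*gf length Lw))
     + fps_X^2*(gf szp (Gs True)*(gf szp Rw - fps_X*gf szp Rw))"
    using gf_Gs[of False] gf_P0F gf_P1F by simp
  have hb: "gf szp (Gs True) = fps_X^2*(fps_X*gf length Lw*gf length Lw)
     + fps_X^2*(gf szp (Gs False)*(fps_X*gf length Lw*gf length Lw))
     + fps_X^2*(gf szp (Gs True)*(fps_X*gf szp Rw))"
    using gf_Gs[of True] gf_P0T gf_P1T by simp
  have main: "gf szp Gw * (1 - 8 * fps_X + 21 * fps_X ^ 2 - 19 * fps_X ^ 3 - 2 * fps_X ^ 4 + 11 * fps_X ^ 5
      - 6 * fps_X ^ 6 + fps_X ^ 7) = fps_X ^ 2 * (1 - 2 * fps_X - fps_X ^ 2 + fps_X ^ 3)"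
    unfolding gf_Gw by (rule alg[OF gf_L gf_Y gf_Y1 hR ha hb nz1])
  show ?thesis unfolding lhs_eq main[symmetric] using nz2 by simp
qed

end
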